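(* Let $(X,d)$ be a nonempty compact homogeneous metric space of diameter $D$, and let $m$ be a Borel probability measure on $X$ invariant under all isometries. Let $A=\int_{X\times X} d(x,y)\,d(m\times m)(x,y)$ and $\mu=1-(m\times m)(\Delta)$, where $\Delta$ is the diagonal of $X\times X$. If $A=\mu D$, then $X$ is finite, $d(x,y)=D$ for all $x\neq y$ in $X$ (i.e. $d$ is $D$ times the discrete metric), and $m$ is the uniform probability measure on $X$.
   Context: A metric space is homogeneous if its isometry group acts transitively on its points. *)

theory Defs
  imports "HOL-Probability.Probability"
begin

definition isometry :: "('a::metric_space \<Rightarrow> 'a) \<Rightarrow> bool" where
  "isometry f \<longleftrightarrow> bij f \<and> (\<forall>x y. dist (f x) (f y) = dist x y)"

definition homogeneous_space :: "'a::metric_space itself \<Rightarrow> bool" where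
  "homogeneous_space _ \<longleftrightarrow> (\<forall>x y::'a. \<exists>f. isometry f \<and> f x = y)"

end

theory Submission
  imports Defs
begin

lemma cover_balls:
  fixes r :: real
  assumes "compact (UNIV :: 'a::metric_space set)" "r > 0"
  obtains G :: "'a::metric_space set" where "finite G" "UNIV \<subseteq> (\<Union>c\<in>G. ball c r)"
proof -
  have "UNIV \<subseteq> (\<Union>c\<in>UNIV. ball c r)" using assms(2) by auto
  from compactE_image[OF assms(1), of UNIV "\<lambda>c. ball c r", OF _ this]
  show ?thesis using that by auto
qed

lemma iso_ball:
  assumes "isometry f" "f y = x"
  shows "f -` ball x r = ball y r"
  using assms unfolding isometry_def by (auto simp: dist_commute)

theorem proposition2p3:
  fixes m :: "'a::metric_space measure"
  assumes compact: "compact (UNIV :: 'a set)"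
    and homog: "homogeneous_space TYPE('a)"
    and borel: "sets m = sets borel"
    and prob: "prob_space m"
    and invariant: "\<And>f A. isometry f \<Longrightarrow> A \<in> sets m \<Longrightarrow> measure m (f -` A) = measure m A"
    and eq: "(\<integral>p. dist (fst p) (snd p) \<partial>(m \<Otimes>\<^sub>M m))
             = (1 - measure (m \<Otimes>\<^sub>M m) {p. fst p = snd p}) * diameter (UNIV :: 'a set)"
  shows "finite (UNIV :: 'a set)
    \<and> (\<forall>x y::'a. x \<noteq> y \<longrightarrow> dist x y = diameter (UNIV :: 'a set))
    \<and> (\<forall>x::'a. measure m {x} = 1 / real (card (UNIV :: 'a set)))"
proof -
  define D where "D = diameter (UNIV :: 'a set)"
  define M2 where "M2 = m \<Otimes>\<^sub>M m"
  define \<Delta> where "\<Delta> = {p::'a\<times>'a. fst p = snd p}"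
  interpret P: prob_space m by (rule prob)
  have spm: "space m = UNIV" using sets_eq_imp_space_eq[OF borel] by simp
  have M2prob: "prob_space M2" unfolding M2_def by (rule prob_space_pair[OF prob prob])
  interpret Q: prob_space M2 by (rule M2prob)
  have spM2: "space M2 = UNIV" by (simp add: M2_def space_pair_measure spm)
  have setsM2: "sets M2 = sets (borel \<Otimes>\<^sub>M borel)"
    unfolding M2_def by (rule sets_pair_measure_cong[OF borel borel])
  have bdd: "bounded (UNIV :: 'a set)" using compact by (rule compact_imp_bounded)
  have distD: "dist x y \<le> D" for x y :: 'a
    unfolding D_def by (rule diameter_bounded_bound[OF bdd]) auto
  have homE: "\<exists>f. isometry f \<and> f x = y" for x y :: 'a
    using homog unfolding homogeneous_space_def by blast
  have net: "\<exists>F. finite F \<and> (\<forall>x::'a. \<exists>c\<in>F. dist x c < r)" if rp: "r > 0" for r :: real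
  proof -
    obtain F :: "'a set" where "finite F" "UNIV \<subseteq> (\<Union>c\<in>F. ball c r)"
      using cover_balls[OF compact rp] by blast
    have "\<exists>c\<in>F. dist x c < r" for x :: 'a
    proof -
      have "x \<in> (\<Union>c\<in>F. ball c r)" using \<open>UNIV \<subseteq> _\<close> by blast
      then obtain c where "c \<in> F" "x \<in> ball c r" by blast
      then show ?thesis by (auto simp: dist_commute)
    qed
    then show ?thesis using \<open>finite F\<close> by blast
  qed
  have "\<forall>n. \<exists>F. finite F \<and> (\<forall>x::'a. \<exists>c\<in>F. dist x c < 1 / real (Suc n))"
    using net by simp
  then obtain F :: "nat \<Rightarrow> 'a set" where F: "\<And>n. finite (F n)" "\<And>n x. \<exists>c\<in>F n. dist x c < 1 / real (Suc n)"
    by metis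
  define C where "C = (\<Union>n. F n)"
  have cC: "countable C" unfolding C_def using F(1) by (simp add: countable_finite)
  have Cdense: "\<exists>c\<in>C. dist x c < e" if ep: "e > 0" for x e
  proof -
    obtain n where "1 / real (Suc n) < e" using nat_approx_posE[OF ep] by blast
    with F(2)[of n x] show ?thesis unfolding C_def by force
  qed
  have dist_inf: "dist x y = (INF c\<in>C. dist x c + dist c y)" for x y :: 'a
  proof -
    have Cne: "C \<noteq> {}" using Cdense[of 1 x] by auto
    have bb: "bdd_below ((\<lambda>c. dist x c + dist c y) ` C)"
      by (rule bdd_belowI[of _ 0]) auto
    have ge: "dist x y \<le> (INF c\<in>C. dist x c + dist c y)"
      by (rule cINF_greatest[OF Cne]) (rule dist_triangle)
    have le: "(INF c\<in>C. dist x c + dist c y) \<le> dist x y + e" if "e > 0" for e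
    proof -
      obtain c where c: "c \<in> C" "dist x c < e/2" using Cdense[of "e/2" x] \<open>e > 0\<close> by auto
      have "(INF c\<in>C. dist x c + dist c y) \<le> dist x c + dist c y"
        by (rule cINF_lower[OF bb c(1)])
      also have "\<dots> \<le> dist x c + (dist c x + dist x y)"
        using dist_triangle[of c y x] by simp
      also have "\<dots> \<le> dist x y + e" using c(2) by (simp add: dist_commute)
      finally show ?thesis .
    qed
    show ?thesis using ge le by (meson field_le_epsilon order_antisym)
  qed
  have dmeas: "(\<lambda>p. dist (fst p) (snd p)) \<in> borel_measurable M2"
  proof -
    have cm: "(\<lambda>x. dist x c) \<in> borel_measurable borel" for c :: 'a
      by (intro borel_measurable_continuous_onI continuous_intros)
    have cm2: "(\<lambda>x. dist c x) \<in> borel_measurable borel" for c :: 'a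
      by (intro borel_measurable_continuous_onI continuous_intros)
    have "(\<lambda>p. INF c\<in>C. dist (fst p) c + dist c (snd p)) \<in> borel_measurable (borel \<Otimes>\<^sub>M borel)"
    proof (rule borel_measurable_cINF_real[OF cC])
      fix c assume "c \<in> C"
      show "(\<lambda>p. dist (fst p) c + dist c (snd p)) \<in> borel_measurable (borel \<Otimes>\<^sub>M borel)"
        using measurable_comp[OF measurable_fst cm[of c]] measurable_comp[OF measurable_snd cm2[of c]]
        by (intro borel_measurable_add) (auto simp: o_def)
    qed
    moreover have "(\<lambda>p. dist (fst p) (snd p)) = (\<lambda>p::'a\<times>'a. INF c\<in>C. dist (fst p) c + dist c (snd p))"
      by (rule ext) (rule dist_inf)
    ultimately have "(\<lambda>p. dist (fst p) (snd p)) \<in> borel_measurable (borel \<Otimes>\<^sub>M (borel :: 'a measure))"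
      by simp
    then show ?thesis using measurable_cong_sets[OF setsM2 refl] by blast
  qed
  have Dsets: "\<Delta> \<in> sets M2"
  proof -
    have "(\<lambda>p. dist (fst p) (snd p)) -` {0} \<inter> space M2 \<in> sets M2"
      by (rule measurable_sets[OF dmeas]) simp
    moreover have "(\<lambda>p. dist (fst p) (snd p)) -` {0} \<inter> space M2 = \<Delta>"
      by (auto simp: \<Delta>_def spM2 prod_eq_iff)
    ultimately show ?thesis by simp
  qed
  have Dc: "UNIV - \<Delta> \<in> sets M2"
    using sets.Diff[OF sets.top Dsets] spM2 by simp
  have ballpos: "measure m (ball x r) > 0" if rp: "r > 0" for x :: 'a and r
  proof (rule ccontr)
    assume "\<not> ?thesis"
    then have z: "measure m (ball x r) = 0" using measure_nonneg[of m] by (meson not_less order_antisym)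
    have zy: "measure m (ball y r) = 0" for y
    proof -
      obtain f where f: "isometry f" "f y = x" using homE by blast
      have "measure m (f -` ball x r) = measure m (ball x r)"
        by (rule invariant[OF f(1)]) (simp add: borel)
      with iso_ball[OF f] z show ?thesis by simp
    qed
    obtain G :: "'a set" where G: "finite G" "UNIV \<subseteq> (\<Union>c\<in>G. ball c r)"
      using cover_balls[OF compact rp] by blast
    have "1 = measure m (\<Union>c\<in>G. ball c r)"
      using G(2) P.prob_space spm by (metis subset_antisym top_greatest)
    also have "\<dots> \<le> (\<Sum>c\<in>G. measure m (ball c r))"
      by (rule P.finite_measure_subadditive_finite[OF G(1)]) (auto simp: borel)
    also have "\<dots> = 0" using zy by simp
    finally show False by simp
  qed
  have key: "dist x y = D" if "x \<noteq> y" for x y :: 'a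
  proof (rule ccontr)
    assume "dist x y \<noteq> D"
    then have lt: "dist x y < D" using distD[of x y] by simp
    define a where "a = dist x y"
    have apos: "a > 0" using that by (simp add: a_def)
    define \<delta> where "\<delta> = (D - a) / 3"
    have dpos: "\<delta> > 0" using lt by (simp add: \<delta>_def a_def)
    define r where "r = min \<delta> (a/2)"
    have rpos: "r > 0" using dpos apos by (simp add: r_def)
    define U where "U = ball x r"
    define V where "V = ball y r"
    have "3 * \<delta> = D - a" by (simp add: \<delta>_def)
    have UV: "dist u v < D - \<delta> \<and> u \<noteq> v" if "u \<in> U" "v \<in> V" for u v
    proof -
      have du: "dist u x < r" "dist v y < r" using that by (auto simp: U_def V_def dist_commute)
      have "dist u v \<le> dist u x + dist x y + dist y v"
        by (metis add.commute add_left_mono dist_commute dist_triangle order_trans)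
      moreover have "dist x y \<le> dist x u + dist u v + dist v y"
        by (metis add.commute add_left_mono dist_commute dist_triangle order_trans)
      moreover have r1: "r \<le> \<delta>" "r \<le> a/2" by (simp_all add: r_def)
      moreover have "dist v y = dist y v" "dist x u = dist u x" by (simp_all add: dist_commute)
      ultimately have "dist u v < D - \<delta>" "dist u v > 0"
        using du \<open>3 * \<delta> = D - a\<close> unfolding a_def by linarith+
      then show ?thesis by auto
    qed
    define g where "g p = D * indicator (UNIV - \<Delta>) p - dist (fst p) (snd p)" for p :: "'a \<times> 'a"
    have gmeas: "g \<in> borel_measurable M2"
      unfolding g_def using Dc dmeas spM2
      by (intro borel_measurable_diff borel_measurable_times borel_measurable_const
          borel_measurable_indicator) (auto)
    have gint: "integrable M2 g"
    proof (rule Q.integrable_const_bound[where B = "2*D"])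
      have "norm (g p) \<le> 2 * D" for p
      proof -
        have "0 \<le> D" using distD[of "fst p" "fst p"] by simp
        moreover have "0 \<le> dist (fst p) (snd p)" "dist (fst p) (snd p) \<le> D"
          using distD[of "fst p" "snd p"] by auto
        moreover have "g p = (if p \<in> \<Delta> then 0 else D - dist (fst p) (snd p))"
          by (auto simp: g_def indicator_def \<Delta>_def)
        ultimately show ?thesis by (smt (verit) real_norm_def)
      qed
      then show "AE p in M2. norm (g p) \<le> 2 * D" by simp
    qed (rule gmeas)
    have dint: "integrable M2 (\<lambda>p. dist (fst p) (snd p))"
      by (rule Q.integrable_const_bound[where B = D]) (use distD dmeas in auto)
    have iint: "integrable M2 (indicator (UNIV - \<Delta>) :: _ \<Rightarrow> real)"
      by (rule Q.integrable_const_bound[where B = 1])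
        (use Dc spM2 in \<open>auto simp: indicator_def\<close>)
    have "integral\<^sup>L M2 g = D * measure M2 (UNIV - \<Delta>) - (\<integral>p. dist (fst p) (snd p) \<partial>M2)"
      unfolding g_def using iint dint spM2 by simp
    also have "measure M2 (UNIV - \<Delta>) = 1 - measure M2 \<Delta>"
      using Q.prob_compl[OF Dsets] spM2 by simp
    finally have g0: "integral\<^sup>L M2 g = 0"
      using eq by (simp add: M2_def \<Delta>_def D_def algebra_simps)
    have UVs: "U \<times> V \<in> sets M2" unfolding setsM2 U_def V_def by simp
    have "emeasure M2 (U \<times> V) = emeasure m U * emeasure m V"
      unfolding M2_def by (rule P.emeasure_pair_measure_Times) (auto simp: borel U_def V_def)
    then have mUV: "measure M2 (U \<times> V) = measure m U * measure m V"
      by (simp add: Q.emeasure_eq_measure P.emeasure_eq_measure ennreal_mult'[symmetric])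
    have pos: "measure M2 (U \<times> V) > 0"
      using mUV ballpos[OF rpos, of x] ballpos[OF rpos, of y] by (simp add: U_def V_def)
    have "\<delta> * measure M2 (U \<times> V) = (\<integral>p. \<delta> * indicator (U \<times> V) p \<partial>M2)"
      using UVs spM2 by simp
    also have "\<dots> \<le> integral\<^sup>L M2 g"
    proof (rule integral_mono[OF _ gint])
      show "integrable M2 (\<lambda>p. \<delta> * indicator (U \<times> V) p)"
        by (rule Q.integrable_const_bound[where B = \<delta>])
          (use UVs spM2 dpos in \<open>auto simp: indicator_def\<close>)
      fix p :: "'a \<times> 'a"
      show "\<delta> * indicator (U \<times> V) p \<le> g p"
      proof (cases "p \<in> U \<times> V")
        case True
        then show ?thesis using UV[of "fst p" "snd p"]
          by (auto simp: g_def \<Delta>_def indicator_def)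
      next
        case False
        then show ?thesis using distD[of "fst p" "snd p"]
          by (auto simp: g_def \<Delta>_def indicator_def)
      qed
    qed
    finally show False using g0 mult_pos_pos[OF dpos pos] by linarith
  qed
  have fin: "finite (UNIV :: 'a set)"
  proof (cases "D > 0")
    case True
    obtain G :: "'a set" where G: "finite G" "UNIV \<subseteq> (\<Union>c\<in>G. ball c D)"
      using cover_balls[OF compact True] by blast
    have "UNIV \<subseteq> G"
    proof
      fix x :: 'a
      have "x \<in> (\<Union>c\<in>G. ball c D)" using G(2) by blast
      then obtain c where "c \<in> G" "dist c x < D" by auto
      then show "x \<in> G" using key[of c x] by fastforce
    qed
    then show ?thesis using G(1) finite_subset by blast
  next
    case False
    then have "x = y" for x y :: 'a using key[of x y] distD[of x y] by force
    then have "UNIV \<subseteq> {undefined :: 'a}" by auto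
    then show ?thesis using finite_subset by blast
  qed
  have same: "measure m {x} = measure m {y}" for x y :: 'a
  proof -
    obtain f where f: "isometry f" "f y = x" using homE by blast
    have "f -` {x} = {y}" using f unfolding isometry_def bij_def inj_def by auto
    then show ?thesis using invariant[OF f(1), of "{x}"] by (simp add: borel)
  qed
  have "1 = measure m UNIV" using P.prob_space spm by simp
  also have "\<dots> = (\<Sum>y\<in>UNIV. measure m {y})"
    by (rule P.finite_measure_eq_sum_singleton[OF fin]) (simp add: borel)
  finally have s1: "1 = (\<Sum>y\<in>UNIV. measure m {y})" .
  have "1 = real (card (UNIV :: 'a set)) * measure m {x}" for x :: 'a
  proof -
    have "(\<Sum>y\<in>UNIV. measure m {y}) = (\<Sum>y\<in>(UNIV::'a set). measure m {x})"
      by (rule sum.cong) (auto intro: same)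
    then show ?thesis using s1 by simp
  qed
  then have unif: "measure m {x} = 1 / real (card (UNIV :: 'a set))" for x :: 'a
  proof -
    have e: "1 = real (card (UNIV :: 'a set)) * measure m {x}" by fact
    have "real (card (UNIV :: 'a set)) \<noteq> 0"
    proof
      assume "real (card (UNIV :: 'a set)) = 0"
      with e show False by simp
    qed
    with e show ?thesis by (simp add: field_simps)
  qed
  show ?thesis using fin key unif unfolding D_def by blast
qed

end
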